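(* Let $f\in\mathcal{S}_G^{\ast}$ and let its inverse have the expansion $f^{-1}(w)=w+A_2w^2+A_3w^3+\cdots$ near $w=0$. Then $$|A_2|\le\frac12,\qquad |A_3|\le\frac5{12},\qquad |A_4|\le\frac{31}{72}.$$ The bounds on $|A_2|$ and $|A_3|$ are sharp.
   Context: Let $\mathcal{U}=\{z\in\mathbb{C}:|z|<1\}$. Let $\mathcal{S}$ denote the class of functions $f$ analytic and univalent in $\mathcal{U}$ normalized by $f(0)=0$, $f'(0)=1$; each such $f$ has an analytic inverse $f^{-1}$ on $|w|<1/4$. For analytic $g,h$ on $\mathcal{U}$, $g\prec h$ means there is an analytic $w$ on $\mathcal{U}$ with $w(0)=0$, $|w(z)|<1$, and $g(z)=h(w(z))$. Let $\Psi(z)=\frac{z}{\ln(1+z)}$ on $\mathcal{U}$ (principal branch, $\Psi(0)=1$). Define $\mathcal{S}_G^{\ast}=\{f\in\mathcal{S}: zf'(z)/f(z)\prec\Psi(z)\}$. "Sharp" means the bound is attained by some function in $\mathcal{S}_G^{\ast}$. *)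

theory Defs
  imports "HOL-Complex_Analysis.Complex_Analysis"
begin

abbreviation unit_disk :: "complex set" where
  "unit_disk \<equiv> ball 0 1"

definition subordinate :: "(complex \<Rightarrow> complex) \<Rightarrow> (complex \<Rightarrow> complex) \<Rightarrow> bool" where
  "subordinate g h \<longleftrightarrow> (\<exists>w. w holomorphic_on unit_disk \<and> w 0 = 0 \<and>
      (\<forall>z\<in>unit_disk. norm (w z) < 1 \<and> g z = h (w z)))"

definition class_S :: "(complex \<Rightarrow> complex) set" where
  "class_S = {f. f holomorphic_on unit_disk \<and> inj_on f unit_disk \<and> f 0 = 0 \<and> deriv f 0 = 1}"

definition Psi :: "complex \<Rightarrow> complex" where
  "Psi z = (if z = 0 then 1 else z / Ln (1 + z))"

definition starlike_quot :: "(complex \<Rightarrow> complex) \<Rightarrow> complex \<Rightarrow> complex" where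
  "starlike_quot f z = (if z = 0 then 1 else z * deriv f z / f z)"

definition class_SG :: "(complex \<Rightarrow> complex) set" where
  "class_SG = {f \<in> class_S. subordinate (starlike_quot f) Psi}"

text \<open>n-th Taylor coefficient at 0 of the inverse function f^{-1}
  (the inverse of f restricted to the unit disk; it is analytic near 0).\<close>
definition inv_coeff :: "(complex \<Rightarrow> complex) \<Rightarrow> nat \<Rightarrow> complex" where
  "inv_coeff f n = (deriv ^^ n) (inv_into unit_disk f) 0 / of_nat (fact n)"

end

theory Submission
  imports Defs
begin

unbundle no vec_syntax
declare One_nat_def [simp del]




lemma fps_unique:
  fixes f :: "complex \<Rightarrow> complex"
  assumes "f has_fps_expansion F" "f has_fps_expansion G" shows "F = G"
  by (rule fps_ext) (simp add: fps_nth_fps_expansion[OF assms(1)] fps_nth_fps_expansion[OF assms(2)])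

lemma fps_eq_from_fun:
  fixes f g :: "complex \<Rightarrow> complex"
  assumes "f has_fps_expansion F" "g has_fps_expansion G" "\<And>z. z \<in> ball 0 1 \<Longrightarrow> f z = g z"
  shows "F = G"
proof -
  have "eventually (\<lambda>z. z \<in> ball (0::complex) 1) (nhds 0)"
    by (intro eventually_nhds_in_open) auto
  hence ev: "eventually (\<lambda>z. g z = f z) (nhds 0)"
    by eventually_elim (use assms(3) in auto)
  have "f has_fps_expansion G"
    using has_fps_expansion_cong[OF ev refl] assms(2) by simp
  thus ?thesis using fps_unique assms(1) by blast
qed

lemma holo_fps:
  assumes "f holomorphic_on ball 0 1"
  shows "f has_fps_expansion fps_expansion f 0"
  using assms by (intro has_fps_expansion_fps_expansion[of "ball 0 1"]) auto

lemma fps_expansion_nth0: "fps_expansion f 0 $ 0 = f 0"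
  by (simp add: fps_expansion_def One_nat_def)

lemma fps_expansion_nth1: "fps_expansion f 0 $ 1 = deriv f 0"
  by (simp add: fps_expansion_def One_nat_def)

definition Lg :: "complex \<Rightarrow> complex" where "Lg z = Ln (1 + z)"
definition Ef :: "complex \<Rightarrow> complex" where
  "Ef z = (if z = 0 then deriv Lg 0 else (Lg z - Lg 0) / (z - 0))"

lemma one_plus_notin: "norm (z::complex) < 1 \<Longrightarrow> 1 + z \<notin> \<real>\<^sub>\<le>\<^sub>0"
proof
  assume "norm z < 1" "1 + z \<in> \<real>\<^sub>\<le>\<^sub>0"
  hence "Re (1 + z) \<le> 0" by (auto simp: complex_nonpos_Reals_iff)
  moreover have "\<bar>Re z\<bar> < 1" using abs_Re_le_cmod[of z] \<open>norm z < 1\<close> by linarith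
  ultimately show False by simp
qed

lemma Lg_holo: "Lg holomorphic_on ball 0 1"
  unfolding Lg_def by (intro holomorphic_intros) (auto simp: one_plus_notin)

lemma Lg_deriv: "norm z < 1 \<Longrightarrow> deriv Lg z = inverse (1 + z)"
proof -
  assume z: "norm z < 1"
  have "(Ln has_field_derivative inverse (1 + z)) (at (1 + z))"
    by (rule has_field_derivative_Ln) (use one_plus_notin[OF z] in auto)
  hence "((\<lambda>x. Ln (1 + x)) has_field_derivative inverse (1 + z) * 1) (at z)"
    by (rule DERIV_chain2) (auto intro!: derivative_eq_intros)
  thus ?thesis unfolding Lg_def by (simp add: DERIV_imp_deriv)
qed

lemma Lg0: "Lg 0 = 0" by (simp add: Lg_def)

lemma Lg_ne0: "norm z < 1 \<Longrightarrow> z \<noteq> 0 \<Longrightarrow> Lg z \<noteq> 0"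
proof
  assume z: "norm z < 1" "z \<noteq> 0" "Lg z = 0"
  have "1 + z \<noteq> 0" using one_plus_notin[OF z(1)] by auto
  hence "exp (Lg z) = 1 + z" by (simp add: Lg_def)
  with z(3) have "1 + z = 1" by simp
  with z(2) show False by simp
qed

lemma Ef_holo: "Ef holomorphic_on ball 0 1"
  unfolding Ef_def by (rule pole_lemma[OF Lg_holo]) auto

lemma Ef_ne0: "norm z < 1 \<Longrightarrow> Ef z \<noteq> 0"
  using Lg_ne0[of z] Lg_deriv[of 0] by (auto simp: Ef_def Lg0)

lemma Psi_Ef: "norm z < 1 \<Longrightarrow> Psi z = inverse (Ef z)"
  using Lg_deriv[of 0] by (auto simp: Ef_def Psi_def Lg_def field_simps)

lemma Psi_holo: "Psi holomorphic_on ball 0 1"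
proof -
  have "(\<lambda>z. inverse (Ef z)) holomorphic_on ball 0 1"
    using Ef_holo Ef_ne0 by (intro holomorphic_intros) auto
  thus ?thesis by (rule holomorphic_transform) (simp add: Psi_Ef)
qed

lemma Psi_Lg: "norm z < 1 \<Longrightarrow> Psi z * Lg z = z"
  using Lg_ne0[of z] by (cases "z = 0") (auto simp: Psi_def Lg_def)

lemma sum4: "(\<Sum>i\<in>{0..4::nat}. f i) = f 0 + f 1 + f 2 + f 3 + (f 4::'a::comm_monoid_add)"
  by (simp add: numeral_eq_Suc add_ac One_nat_def)
lemma sum3: "(\<Sum>i\<in>{0..3::nat}. f i) = f 0 + f 1 + f 2 + (f 3::'a::comm_monoid_add)"
  by (simp add: numeral_eq_Suc add_ac One_nat_def)
lemma sum2: "(\<Sum>i\<in>{0..2::nat}. f i) = f 0 + f 1 + (f 2::'a::comm_monoid_add)"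
  by (simp add: numeral_eq_Suc add_ac One_nat_def)
lemma sum1: "(\<Sum>i\<in>{0..1::nat}. f i) = f 0 + (f 1::'a::comm_monoid_add)"
  by (simp add: numeral_eq_Suc add_ac One_nat_def)
lemma mult_coeffs:
  fixes A B :: "complex fps"
  shows "(A*B)$0 = A$0*B$0" "(A*B)$1 = A$0*B$1 + A$1*B$0"
   "(A*B)$2 = A$0*B$2 + A$1*B$1 + A$2*B$0"
   "(A*B)$3 = A$0*B$3 + A$1*B$2 + A$2*B$1 + A$3*B$0"
   "(A*B)$4 = A$0*B$4 + A$1*B$3 + A$2*B$2 + A$3*B$1 + A$4*B$0"
  by (simp_all add: fps_mult_nth sum1 sum2 sum3 sum4 One_nat_def)

lemma Lg_fps_deriv: "fps_deriv (fps_expansion Lg 0) = inverse (1 + fps_X)"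
proof (rule fps_eq_from_fun)
  show "deriv Lg has_fps_expansion fps_deriv (fps_expansion Lg 0)"
    by (intro has_fps_expansion_deriv holo_fps Lg_holo)
  show "(\<lambda>z::complex. inverse (1 + z)) has_fps_expansion inverse (1 + fps_X)"
    apply (rule has_fps_expansion_inverse)
    apply (rule has_fps_expansion_add)
    apply (rule has_fps_expansion_1)
    apply (rule has_fps_expansion_fps_X)
    apply simp
    done
qed (simp add: Lg_deriv)

lemma inv1X_coeffs: "inverse (1 + fps_X :: complex fps) $ 0 = 1" "inverse (1 + fps_X :: complex fps) $ 1 = -1"
  "inverse (1 + fps_X :: complex fps) $ 2 = 1" "inverse (1 + fps_X :: complex fps) $ 3 = -1"
proof -
  define V where "V = inverse (1 + fps_X :: complex fps)"
  have "(1 + fps_X) * V = 1" unfolding V_def by (rule inverse_mult_eq_1') simp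
  hence e: "((1 + fps_X) * V) $ n = (1::complex fps) $ n" for n by simp
  have e0: "V$0 = 1" using e[of 0] by (simp add: mult_coeffs)
  have e1: "V$1 + V$0 = 0" using e[of 1] by (simp add: mult_coeffs)
  have e2: "V$2 + V$1 = 0" using e[of 2] by (simp add: mult_coeffs)
  have e3: "V$3 + V$2 = 0" using e[of 3] by (simp add: mult_coeffs)
  have v1: "V$1 = -1" using e0 e1 by algebra
  have v2: "V$2 = 1" using v1 e2 by algebra
  have v3: "V$3 = -1" using v2 e3 by algebra
  show "V $ 0 = 1" "V $ 1 = -1" "V $ 2 = 1" "V $ 3 = -1" using e0 v1 v2 v3 by simp_all
qed

lemma Lg_coeffs: "fps_expansion Lg 0 $ 0 = 0" "fps_expansion Lg 0 $ 1 = 1"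
  "fps_expansion Lg 0 $ 2 = -1/2" "fps_expansion Lg 0 $ 3 = 1/3" "fps_expansion Lg 0 $ 4 = -1/4"
proof -
  have d: "fps_deriv (fps_expansion Lg 0) $ n = inverse (1 + fps_X :: complex fps) $ n" for n
    by (simp only: Lg_fps_deriv)
  have d0: "fps_expansion Lg 0 $ 1 = inverse (1 + fps_X :: complex fps) $ 0" using d[of 0] by simp
  have d1: "2 * fps_expansion Lg 0 $ 2 = inverse (1 + fps_X :: complex fps) $ 1" using d[of 1] by simp
  have d2: "3 * fps_expansion Lg 0 $ 3 = inverse (1 + fps_X :: complex fps) $ 2" using d[of 2] by simp
  have d3: "4 * fps_expansion Lg 0 $ 4 = inverse (1 + fps_X :: complex fps) $ 3" using d[of 3] by simp
  show "fps_expansion Lg 0 $ 1 = 1"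
  "fps_expansion Lg 0 $ 2 = -1/2" "fps_expansion Lg 0 $ 3 = 1/3" "fps_expansion Lg 0 $ 4 = -1/4"
    using d0 d1 d2 d3 unfolding inv1X_coeffs by (simp_all add: field_simps)
  show "fps_expansion Lg 0 $ 0 = 0" by (simp add: fps_expansion_nth0 Lg0)
qed

lemma Psi_coeffs: "fps_expansion Psi 0 $ 0 = 1" "fps_expansion Psi 0 $ 1 = 1/2"
  "fps_expansion Psi 0 $ 2 = -1/12" "fps_expansion Psi 0 $ 3 = 1/24"
proof -
  define P where "P = fps_expansion Psi 0"
  define L where "L = fps_expansion Lg 0"
  have "P * L = fps_X" unfolding P_def L_def
  proof (rule fps_eq_from_fun)
    show "(\<lambda>z. Psi z * Lg z) has_fps_expansion fps_expansion Psi 0 * fps_expansion Lg 0"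
      by (intro has_fps_expansion_mult holo_fps Lg_holo Psi_holo)
  qed (auto simp: Psi_Lg intro: has_fps_expansion_fps_X)
  hence e: "(P * L) $ n = fps_X $ n" for n by simp
  note Lc = Lg_coeffs[folded L_def]
  have p0: "P$0 = 1" by (simp add: P_def fps_expansion_nth0 Psi_def)
  have e2: "P$0 * L$2 + P$1 * L$1 = 0" using e[of 2] by (simp add: mult_coeffs Lc)
  have e3: "P$0 * L$3 + P$1 * L$2 + P$2 * L$1 = 0" using e[of 3] by (simp add: mult_coeffs Lc)
  have e4: "P$0 * L$4 + P$1 * L$3 + P$2 * L$2 + P$3 * L$1 = 0" using e[of 4] by (simp add: mult_coeffs Lc)
  have p1: "P$1 = 1/2" using e2 p0 by (simp add: Lc field_simps)
  have p2: "P$2 = -1/12" using e3 p0 p1 by (simp add: Lc field_simps) algebra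
  have p3: "P$3 = 1/24" using e4 p0 p1 p2 by (simp add: Lc field_simps)
  show "fps_expansion Psi 0 $ 0 = 1" "fps_expansion Psi 0 $ 1 = 1/2"
  "fps_expansion Psi 0 $ 2 = -1/12" "fps_expansion Psi 0 $ 3 = 1/24"
    using p0 p1 p2 p3 by (simp_all add: P_def)
qed

lemma pow_coeffs:
  fixes B :: "complex fps" assumes "B$0 = 0"
  shows "(B^2)$0 = 0" "(B^2)$1 = 0" "(B^2)$2 = (B$1)^2" "(B^2)$3 = 2*B$1*B$2" "(B^2)$4 = 2*B$1*B$3 + (B$2)^2"
   "(B^3)$0 = 0" "(B^3)$1 = 0" "(B^3)$2 = 0" "(B^3)$3 = (B$1)^3" "(B^3)$4 = 3*(B$1)^2*B$2"
   "(B^4)$0 = 0" "(B^4)$1 = 0" "(B^4)$2 = 0" "(B^4)$3 = 0" "(B^4)$4 = (B$1)^4"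
proof -
  have e2: "B^2 = B*B" and e3: "B^3 = B*(B*B)" and e4: "B^4 = B*(B*(B*B))"
    by (simp_all add: power2_eq_square power3_eq_cube power4_eq_xxxx mult.assoc)
  show "(B^2)$0 = 0" "(B^2)$1 = 0" "(B^2)$2 = (B$1)^2" "(B^2)$3 = 2*B$1*B$2" "(B^2)$4 = 2*B$1*B$3 + (B$2)^2"
   "(B^3)$0 = 0" "(B^3)$1 = 0" "(B^3)$2 = 0" "(B^3)$3 = (B$1)^3" "(B^3)$4 = 3*(B$1)^2*B$2"
   "(B^4)$0 = 0" "(B^4)$1 = 0" "(B^4)$2 = 0" "(B^4)$3 = 0" "(B^4)$4 = (B$1)^4"
    unfolding e2 e3 e4 by (simp_all add: mult_coeffs assms algebra_simps power2_eq_square power3_eq_cube power4_eq_xxxx)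
qed

lemma compose_coeffs:
  fixes A B :: "complex fps" assumes B0: "B$0 = 0"
  shows "(A oo B)$1 = A$1 * B$1"
    "(A oo B)$2 = A$1 * B$2 + A$2 * (B$1)^2"
    "(A oo B)$3 = A$1 * B$3 + 2*A$2*B$1*B$2 + A$3*(B$1)^3"
    "(A oo B)$4 = A$1 * B$4 + A$2*(2*B$1*B$3 + (B$2)^2) + 3*A$3*(B$1)^2*B$2 + A$4*(B$1)^4"
  by (simp_all add: fps_compose_nth sum1 sum2 sum3 sum4 pow_coeffs[OF B0] B0 power2_eq_square[symmetric] power3_eq_cube[symmetric] algebra_simps)

lemma coeff_algebra:
  fixes W P F G :: "complex fps"
  assumes W0: "W$0 = 0" and P0: "P$0 = 1" and P1: "P$1 = 1/2" and P2: "P$2 = -1/12" and P3: "P$3 = 1/24"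
    and F0: "F$0 = 0" and F1: "F$1 = 1"
    and eqF: "fps_X * fps_deriv F = (P oo W) * F"
    and eqG: "G oo F = fps_X" and G0: "G$0 = 0"
  shows "G$2 = - W$1/2" "G$3 = 5/12*(W$1)^2 - W$2/4"
    "G$4 = -(1/6)*(W$3 - 10/3*W$1*W$2 + 31/12*(W$1)^3)"
proof -
  define H where "H = P oo W"
  have H0: "H$0 = 1" by (simp add: H_def P0)
  have H1: "H$1 = W$1/2" by (simp add: H_def compose_coeffs[OF W0] P1)
  have H2: "H$2 = W$2/2 - (W$1)^2/12" by (simp add: H_def compose_coeffs[OF W0] P1 P2)
  have H3: "H$3 = W$3/2 - W$1*W$2/6 + (W$1)^3/24" by (simp add: H_def compose_coeffs[OF W0] P1 P2 P3)
  have eF: "(fps_X * fps_deriv F) $ n = (H * F) $ n" for n using eqF by (simp add: H_def)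
  have f2: "2 * F$2 = H$0 * F$2 + H$1 * F$1" using eF[of 2] by (simp add: mult_coeffs F0)
  have f3: "3 * F$3 = H$0 * F$3 + H$1 * F$2 + H$2 * F$1" using eF[of 3] by (simp add: mult_coeffs F0)
  have f4: "4 * F$4 = H$0 * F$4 + H$1 * F$3 + H$2 * F$2 + H$3 * F$1" using eF[of 4] by (simp add: mult_coeffs F0)
  have F2: "F$2 = W$1/2" using f2 H0 H1 F1 by (simp add: field_simps)
  have F3: "F$3 = W$2/4 + (W$1)^2/12" using f3 H0 H1 H2 F1 F2 by (simp add: field_simps) algebra
  have F4: "F$4 = W$3/6 + 5*W$1*W$2/72 + (W$1)^3/72" using f4 H0 H1 H2 H3 F1 F2 F3
    by (simp add: field_simps) algebra
  have eG: "(G oo F) $ n = fps_X $ n" for n using eqG by simp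
  have g1: "G$1 * F$1 = 1" using eG[of 1] by (simp add: compose_coeffs[OF F0])
  have g2: "G$1 * F$2 + G$2 * (F$1)^2 = 0" using eG[of 2] by (simp add: compose_coeffs[OF F0])
  have g3: "G$1 * F$3 + 2*G$2*F$1*F$2 + G$3*(F$1)^3 = 0" using eG[of 3] by (simp add: compose_coeffs[OF F0])
  have g4: "G$1 * F$4 + G$2*(2*F$1*F$3 + (F$2)^2) + 3*G$3*(F$1)^2*F$2 + G$4*(F$1)^4 = 0"
    using eG[of 4] by (simp add: compose_coeffs[OF F0])
  have G1: "G$1 = 1" using g1 F1 by simp
  have G2: "G$2 = - W$1/2" using g2 G1 F1 F2 by (simp add: field_simps) algebra
  have G3: "G$3 = 5/12*(W$1)^2 - W$2/4" using g3 G1 G2 F1 F2 F3 by (simp add: field_simps) algebra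
  have G4: "G$4 = -(1/6)*(W$3 - 10/3*W$1*W$2 + 31/12*(W$1)^3)" using g4 G1 G2 G3 F1 F2 F3 F4
    by (simp add: field_simps) algebra
  show "G$2 = - W$1/2" "G$3 = 5/12*(W$1)^2 - W$2/4"
    "G$4 = -(1/6)*(W$3 - 10/3*W$1*W$2 + 31/12*(W$1)^3)" using G2 G3 G4 by simp_all
qed

lemma inverse_holo:
  assumes holf: "f holomorphic_on ball 0 1" and injf: "inj_on f (ball 0 1)"
  shows "open (f ` ball 0 1)" "inv_into (ball 0 1) f holomorphic_on f ` ball 0 1"
proof -
  show "open (f ` ball 0 1)" by (rule open_mapping_thm3[OF holf _ injf]) auto
  obtain g where g: "g holomorphic_on (f ` ball 0 1)"
     "\<And>z. z \<in> ball 0 1 \<Longrightarrow> deriv f z * deriv g (f z) = 1" "\<And>z. z \<in> ball 0 1 \<Longrightarrow> g (f z) = z"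
    by (rule holomorphic_has_inverse[OF holf _ injf]) auto
  show "inv_into (ball 0 1) f holomorphic_on f ` ball 0 1"
    using g(1) by (rule holomorphic_transform) (auto simp: g(3) injf)
qed

lemma main_coeffs:
  assumes f: "f \<in> class_S" and holw: "w holomorphic_on ball 0 1" and w0: "w 0 = 0"
    and wb: "\<And>z. z \<in> ball 0 1 \<Longrightarrow> norm (w z) < 1"
    and sq: "\<And>z. z \<in> ball 0 1 \<Longrightarrow> starlike_quot f z = Psi (w z)"
  shows "inv_coeff f 2 = - fps_expansion w 0 $ 1/2"
    "inv_coeff f 3 = 5/12*(fps_expansion w 0 $ 1)^2 - fps_expansion w 0 $ 2/4"
    "inv_coeff f 4 = -(1/6)*(fps_expansion w 0 $ 3 - 10/3*fps_expansion w 0 $ 1*fps_expansion w 0 $ 2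
        + 31/12*(fps_expansion w 0 $ 1)^3)"
proof -
  from f have holf: "f holomorphic_on ball 0 1" and injf: "inj_on f (ball 0 1)" and f0: "f 0 = 0"
    and df0: "deriv f 0 = 1" by (auto simp: class_S_def)
  define W where "W = fps_expansion w 0"
  define P where "P = fps_expansion Psi 0"
  define F where "F = fps_expansion f 0"
  define g where "g = inv_into (ball 0 1) f"
  define G where "G = fps_expansion g 0"
  have hW: "w has_fps_expansion W" unfolding W_def by (rule holo_fps[OF holw])
  have hP: "Psi has_fps_expansion P" unfolding P_def by (rule holo_fps[OF Psi_holo])
  have hF: "f has_fps_expansion F" unfolding F_def by (rule holo_fps[OF holf])
  have W0: "W$0 = 0" by (simp add: W_def fps_expansion_nth0 w0)
  have F0: "F$0 = 0" by (simp add: F_def fps_expansion_nth0 f0)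
  have F1: "F$1 = 1" by (simp add: F_def fps_expansion_nth1 df0)
  have hH: "(\<lambda>z. Psi (w z)) has_fps_expansion (P oo W)"
    using has_fps_expansion_compose[OF hP hW W0] by (simp add: o_def)
  have fz: "f z \<noteq> 0" if "z \<in> ball 0 1" "z \<noteq> 0" for z
    using injf that f0 by (metis centre_in_ball inj_on_eq_iff zero_less_one)
  have eq1: "z * deriv f z = Psi (w z) * f z" if z: "z \<in> ball 0 1" for z
  proof (cases "z = 0")
    case True thus ?thesis by (simp add: f0)
  next
    case False
    have "starlike_quot f z = z * deriv f z / f z" by (simp add: starlike_quot_def False)
    with sq[OF z] fz[OF z False] show ?thesis by (simp add: field_simps)
  qed
  have eqF: "fps_X * fps_deriv F = (P oo W) * F"
  proof (rule fps_eq_from_fun)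
    show "(\<lambda>z. z * deriv f z) has_fps_expansion fps_X * fps_deriv F"
      by (intro has_fps_expansion_mult has_fps_expansion_fps_X has_fps_expansion_deriv hF)
    show "(\<lambda>z. Psi (w z) * f z) has_fps_expansion (P oo W) * F"
      by (intro has_fps_expansion_mult hH hF)
  qed (rule eq1)
  have ofD: "open (f ` ball 0 1)" and holg: "g holomorphic_on f ` ball 0 1"
    using inverse_holo[OF holf injf] by (simp_all add: g_def)
  have z0: "(0::complex) \<in> f ` ball 0 1" using f0 by (metis centre_in_ball image_eqI zero_less_one)
  have hG: "g has_fps_expansion G" unfolding G_def
    by (rule has_fps_expansion_fps_expansion[OF ofD z0 holg])
  have gf: "g (f z) = z" if "z \<in> ball 0 1" for z
    using that injf by (simp add: g_def)
  have G0: "G$0 = 0" using gf[of 0] f0 by (simp add: G_def fps_expansion_nth0)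
  have eqG: "G oo F = fps_X"
  proof (rule fps_eq_from_fun)
    show "(g \<circ> f) has_fps_expansion (G oo F)" by (rule has_fps_expansion_compose[OF hG hF F0])
    show "(\<lambda>z. z) has_fps_expansion fps_X" by (rule has_fps_expansion_fps_X)
  qed (simp add: gf)
  have ic: "inv_coeff f n = G $ n" for n
    by (simp add: inv_coeff_def G_def g_def fps_expansion_def)
  note res = coeff_algebra[OF W0 Psi_coeffs[folded P_def] F0 F1 eqF eqG G0]
  show "inv_coeff f 2 = - fps_expansion w 0 $ 1/2"
    "inv_coeff f 3 = 5/12*(fps_expansion w 0 $ 1)^2 - fps_expansion w 0 $ 2/4"
    "inv_coeff f 4 = -(1/6)*(fps_expansion w 0 $ 3 - 10/3*fps_expansion w 0 $ 1*fps_expansion w 0 $ 2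
        + 31/12*(fps_expansion w 0 $ 1)^3)"
    using res by (simp_all add: ic W_def)
qed




lemma poly_ineq:
  fixes t Y :: real
  assumes t: "0 \<le> t" "t \<le> 1" and Y: "0 \<le> Y" "Y \<le> 1"
  shows "t * ((31/12)^2 * t^2 + 2*(31/12)*t*(1-t)*(Y + 25/18) + (169/9)*(1-t)^2*Y)
         \<le> (31/12 - (1-t) + (1-t)*Y)^2"
proof -
  define q0 where "q0 = (361/144)*(1-t)^2 + 2*(171/32)*t*(1-t) + (3317/432)*t^2"
  define q1 where "q1 = (817/144)*(1-t)^2 + 2*(35/288)*t*(1-t) + (3317/432)*t^2"
  have q0: "q0 \<ge> 0" unfolding q0_def using t by (intro add_nonneg_nonneg mult_nonneg_nonneg) auto
  have q1: "q1 \<ge> 0" unfolding q1_def using t by (intro add_nonneg_nonneg mult_nonneg_nonneg) auto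
  have id: "(31/12 - (1-t) + (1-t)*Y)^2 - t * ((31/12)^2 * t^2 + 2*(31/12)*t*(1-t)*(Y + 25/18) + (169/9)*(1-t)^2*Y)
     = (1-Y)*((1-t)*q0) + Y*((1-t)*q1) + (1-t)^2*Y^2"
    unfolding q0_def q1_def by (simp add: field_simps power2_eq_square power3_eq_cube) (simp add: algebra_simps)?
  have "0 \<le> (1-Y)*((1-t)*q0) + Y*((1-t)*q1) + (1-t)^2*Y^2"
    using t Y q0 q1 by (intro add_nonneg_nonneg mult_nonneg_nonneg) auto
  with id show ?thesis by linarith
qed

lemma norm_sub_real_sq: "norm (complex_of_real c - u)^2 = c^2 - 2*c*Re u + norm u^2"
  unfolding cmod_power2 by (simp add: power2_eq_square algebra_simps)

lemma Z_bound:
  fixes \<beta> :: complex and s y c :: real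
  assumes s: "0 \<le> s" and y: "norm \<beta> = y" "y \<le> 1" and c: "0 \<le> c"
  shows "norm (complex_of_real c - of_real s * (\<beta>^2 + 10/3*\<beta>))^2
     \<le> c^2 + 2*c* s*(y^2 + 25/18) + (169/9)* s^2*y^2"
proof -
  define u where "u = of_real s * (\<beta>^2 + 10/3*\<beta>)"
  have yy: "y^2 = (Re \<beta>)^2 + (Im \<beta>)^2" using y(1) by (simp add: cmod_power2[symmetric])
  have ReU: "Re u = s * (2*(Re \<beta>)^2 - y^2 + 10/3*Re \<beta>)"
    unfolding yy by (simp add: u_def Re_power2 algebra_simps)
  have lo: "2*(Re \<beta>)^2 - y^2 + 10/3*Re \<beta> \<ge> -(y^2 + 25/18)"
  proof -
    have "0 \<le> 2*(Re \<beta> + 5/6)^2" by simp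
    thus ?thesis by (simp add: power2_eq_square algebra_simps)
  qed
  have reu: "- Re u \<le> s*(y^2 + 25/18)"
    unfolding ReU using mult_left_mono[OF lo s] by (simp add: algebra_simps)
  have nu: "norm u \<le> s * y * (13/3)"
  proof -
    have "u = of_real s * (\<beta> * (\<beta> + 10/3))" by (simp add: u_def power2_eq_square algebra_simps)
    hence "norm u = s * (norm \<beta> * norm (\<beta> + 10/3))"
      using s by (simp add: norm_mult)
    also have nb: "norm (\<beta> + 10/3) \<le> y + 10/3" using norm_triangle_ineq[of \<beta> "10/3"] y by simp
    have "norm \<beta> * norm (\<beta> + 10/3) \<le> y * (y + 10/3)"
      using mult_left_mono[OF nb, of "norm \<beta>"] y(1) norm_ge_zero[of \<beta>] by simp
    hence "s * (norm \<beta> * norm (\<beta> + 10/3)) \<le> s * (y * (y + 10/3))"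
      using s by (intro mult_left_mono) auto
    also have "\<dots> \<le> s * (y * (13/3))"
      using s y norm_ge_zero[of \<beta>] by (intro mult_left_mono) auto
    finally show ?thesis by simp
  qed
  have nu2: "norm u ^2 \<le> (169/9)* s^2*y^2"
  proof -
    have "norm u ^2 \<le> (s*y*(13/3))^2" using nu by (intro power_mono) auto
    thus ?thesis by (simp add: power2_eq_square algebra_simps)
  qed
  have "norm (complex_of_real c - u)^2 = c^2 - 2*c*Re u + norm u^2" by (rule norm_sub_real_sq)
  also have "- 2*c*Re u \<le> 2*c*(s*(y^2 + 25/18))"
    using mult_left_mono[OF reu, of "2*c"] c by simp
  hence "c^2 - 2*c*Re u + norm u^2 \<le> c^2 + 2*c* s*(y^2 + 25/18) + (169/9)* s^2*y^2"
    using nu2 by simp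
  finally show ?thesis by (simp add: u_def)
qed

lemma key_ineq:
  fixes a d1 d2 :: complex
  assumes a: "norm a < 1" and d1: "norm d1 \<le> 1" and d2: "norm d2 \<le> 1 - (norm d1)^2"
  shows "norm ((1 - cnj a * a)*(d2 - cnj a * d1^2) - 10/3 * a * ((1 - cnj a * a) * d1) + 31/12 * a^3) \<le> 31/12"
proof -
  define x where "x = norm a"
  define y where "y = norm d1"
  define s where "s = 1 - x^2"
  have x0: "0 \<le> x" and x1: "x < 1" using a by (auto simp: x_def)
  have y0: "0 \<le> y" and y1: "y \<le> 1" using d1 by (auto simp: y_def)
  have s0: "0 \<le> s" using x0 x1 by (simp add: s_def power_le_one)
  have aa: "cnj a * a = of_real (x^2)"
    using complex_norm_square[of a] by (simp add: x_def mult.commute)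
  have sc: "1 - cnj a * a = of_real s" by (simp add: aa s_def)
  define R where "R = - (of_real s * (cnj a * d1^2)) - 10/3 * a * (of_real s * d1) + 31/12 * a^3"
  have Qeq: "(1 - cnj a * a)*(d2 - cnj a * d1^2) - 10/3 * a * ((1 - cnj a * a) * d1) + 31/12 * a^3
      = of_real s * d2 + R" unfolding sc R_def by (simp add: algebra_simps)
  have M0: "0 \<le> 31/12 - s*(1-y^2)"
  proof -
    have "y^2 \<le> 1" using y0 y1 by (simp add: power_le_one)
    hence "s*(1-y^2) \<le> 1*1" using s0 y0 y1 x0 by (intro mult_mono) (auto simp: s_def)
    thus ?thesis by simp
  qed
  have Rb: "norm R \<le> 31/12 - s*(1-y^2)"
  proof (cases "a = 0")
    case True thus ?thesis using M0 by (simp add: R_def)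
  next
    case False
    hence xp: "0 < x" by (simp add: x_def)
    define \<beta> where "\<beta> = d1 * cnj a / a"
    have nb: "norm \<beta> = y" using False by (simp add: \<beta>_def y_def norm_mult norm_divide)
    define Z where "Z = complex_of_real (31/12 * x^2) - of_real s * (\<beta>^2 + 10/3*\<beta>)"
    have "cnj a * R = a^2 * (31/12 * (cnj a * a) - of_real s * (\<beta>^2 + 10/3*\<beta>))"
      using False by (simp add: R_def \<beta>_def field_simps power2_eq_square power3_eq_cube)
    also have "\<dots> = a^2 * Z" by (simp add: Z_def aa)
    finally have "norm (cnj a * R) = norm (a^2 * Z)" by simp
    hence "x * norm R = x^2 * norm Z" by (simp add: norm_mult norm_power x_def)
    hence nR: "norm R = x * norm Z" using xp by (simp add: power2_eq_square)
    have zb: "norm Z ^2 \<le> (31/12 * x^2)^2 + 2*(31/12 * x^2)* s*(y^2 + 25/18) + (169/9)* s^2*y^2"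
      unfolding Z_def by (rule Z_bound[OF s0 nb y1]) (simp add: x0)
    have pi: "x^2 * ((31/12)^2 * (x^2)^2 + 2*(31/12)*x^2*(1-x^2)*(y^2 + 25/18) + (169/9)*(1-x^2)^2*y^2)
         \<le> (31/12 - (1-x^2) + (1-x^2)*y^2)^2"
      by (rule poly_ineq) (use x0 x1 y0 y1 in \<open>auto simp: power_le_one\<close>)
    have "(x * norm Z)^2 = x^2 * norm Z^2" by (simp add: power_mult_distrib)
    also have "\<dots> \<le> x^2 * ((31/12 * x^2)^2 + 2*(31/12 * x^2)* s*(y^2 + 25/18) + (169/9)* s^2*y^2)"
      using zb by (intro mult_left_mono) auto
    also have "\<dots> = x^2 * ((31/12)^2 * (x^2)^2 + 2*(31/12)*x^2*(1-x^2)*(y^2 + 25/18) + (169/9)*(1-x^2)^2*y^2)"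
      by (simp add: s_def power2_eq_square mult.assoc)
    also have "\<dots> \<le> (31/12 - (1-x^2) + (1-x^2)*y^2)^2" by (rule pi)
    also have "\<dots> = (31/12 - s*(1-y^2))^2" by (simp add: s_def algebra_simps)
    finally have "(x * norm Z)^2 \<le> (31/12 - s*(1-y^2))^2" .
    hence "x * norm Z \<le> 31/12 - s*(1-y^2)"
      using M0 by (rule power2_le_imp_le)
    thus ?thesis by (simp add: nR)
  qed
  have "norm (of_real s * d2 + R) \<le> s * norm d2 + norm R"
    using norm_triangle_ineq[of "of_real s * d2" R] s0 by (simp add: norm_mult)
  also have "s * norm d2 \<le> s * (1 - y^2)" using d2 s0 by (intro mult_left_mono) (auto simp: y_def)
  finally show ?thesis using Rb Qeq by simp
qed




definition schw :: "(complex \<Rightarrow> complex) \<Rightarrow> bool" where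
  "schw w \<longleftrightarrow> w holomorphic_on ball 0 1 \<and> w 0 = 0 \<and> (\<forall>z\<in>ball 0 1. norm (w z) < 1)"

lemma schw_c1:
  assumes "schw w" shows "norm (fps_expansion w 0 $ 1) \<le> 1"
proof -
  have h: "w holomorphic_on ball 0 1" "w 0 = 0" "\<And>z. norm z < 1 \<Longrightarrow> norm (w z) < 1"
    using assms by (auto simp: schw_def)
  show ?thesis using Schwarz_Lemma(2)[OF h, of 0] by (simp add: fps_expansion_nth1)
qed

lemma schw_linear_fps:
  assumes "schw w" "\<And>z. norm z < 1 \<Longrightarrow> w z = \<alpha> * z"
  shows "fps_expansion w 0 = fps_const \<alpha> * fps_X"
proof (rule fps_eq_from_fun)
  show "w has_fps_expansion fps_expansion w 0" using assms(1) by (intro holo_fps) (simp add: schw_def)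
  show "(\<lambda>z. \<alpha> * z) has_fps_expansion fps_const \<alpha> * fps_X"
    by (intro has_fps_expansion_cmult_left has_fps_expansion_fps_X)
qed (simp add: assms(2))

lemma schw_eq1:
  assumes "schw w" "norm (fps_expansion w 0 $ 1) = 1"
  shows "fps_expansion w 0 $ 2 = 0" "fps_expansion w 0 $ 3 = 0"
proof -
  have h: "w holomorphic_on ball 0 1" "w 0 = 0" "\<And>z. norm z < 1 \<Longrightarrow> norm (w z) < 1"
    using assms by (auto simp: schw_def)
  obtain \<alpha> where "\<forall>z. norm z < 1 \<longrightarrow> w z = \<alpha> * z"
    using Schwarz_Lemma(3)[OF h, of 0] assms(2) by (auto simp: fps_expansion_nth1)
  hence e: "fps_expansion w 0 = fps_const \<alpha> * fps_X" using assms(1) by (intro schw_linear_fps) auto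
  show "fps_expansion w 0 $ 2 = 0" "fps_expansion w 0 $ 3 = 0" by (simp_all add: e)
qed

lemma schur:
  assumes sw: "schw w" and a1: "norm (fps_expansion w 0 $ 1) < 1"
  defines "a \<equiv> fps_expansion w 0 $ 1"
  obtains v where "schw v"
    "fps_expansion w 0 $ 2 = (1 - cnj a * a) * fps_expansion v 0 $ 1"
    "fps_expansion w 0 $ 3 = (1 - cnj a * a) * (fps_expansion v 0 $ 2 - cnj a * (fps_expansion v 0 $ 1)^2)"
proof -
  have holw: "w holomorphic_on ball 0 1" and w0: "w 0 = 0" and wb: "\<And>z. norm z < 1 \<Longrightarrow> norm (w z) < 1"
    using sw by (auto simp: schw_def)
  have a: "a = deriv w 0" by (simp add: a_def fps_expansion_nth1)
  have na: "norm a < 1" using a1 by (simp add: a_def)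
  define \<phi> where "\<phi> = (\<lambda>z. if z = 0 then deriv w 0 else (w z - w 0) / (z - 0))"
  have holphi: "\<phi> holomorphic_on ball 0 1" unfolding \<phi>_def by (rule pole_lemma[OF holw]) auto
  have wphi: "w z = z * \<phi> z" if "z \<in> ball 0 1" for z by (simp add: \<phi>_def w0)
  have phib: "norm (\<phi> z) < 1" if z: "z \<in> ball 0 1" for z
  proof (cases "z = 0")
    case True thus ?thesis using na a by (simp add: \<phi>_def)
  next
    case False
    have zz: "norm z < 1" using z by simp
    have le: "norm (w z) \<le> norm z" using Schwarz_Lemma(1)[OF holw w0 wb zz] .
    have "norm (w z) \<noteq> norm z"
    proof
      assume eq: "norm (w z) = norm z"
      obtain \<alpha> where al: "\<forall>z. norm z < 1 \<longrightarrow> w z = \<alpha> * z" "norm \<alpha> = 1"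
        using Schwarz_Lemma(3)[OF holw w0 wb zz] eq False zz by blast
      have "fps_expansion w 0 = fps_const \<alpha> * fps_X" using sw al(1) by (intro schw_linear_fps) auto
      hence "a = \<alpha>" by (simp add: a_def)
      thus False using na al(2) by simp
    qed
    hence "norm (w z) < norm z" using le by simp
    thus ?thesis using False by (simp add: \<phi>_def w0 norm_divide divide_less_eq)
  qed
  define v where "v = (\<lambda>z. Moebius_function 0 a (\<phi> z))"
  have holv: "v holomorphic_on ball 0 1"
  proof -
    have "(Moebius_function 0 a \<circ> \<phi>) holomorphic_on ball 0 1"
      by (rule holomorphic_on_compose_gen[OF holphi Moebius_function_holomorphic[OF na]]) (use phib in auto)
    thus ?thesis by (simp add: v_def o_def)
  qed
  have phi0: "\<phi> 0 = a" by (simp add: \<phi>_def a)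
  have v0: "v 0 = 0" by (simp add: v_def phi0 Moebius_function_eq_zero)
  have vb: "norm (v z) < 1" if "z \<in> ball 0 1" for z
    unfolding v_def by (rule Moebius_function_norm_lt_1[OF na]) (use phib that in auto)
  have sv: "schw v" using holv v0 vb by (simp add: schw_def)
  define W where "W = fps_expansion w 0"
  define \<Phi> where "\<Phi> = fps_expansion \<phi> 0"
  define V where "V = fps_expansion v 0"
  have hPhi: "\<phi> has_fps_expansion \<Phi>" unfolding \<Phi>_def by (rule holo_fps[OF holphi])
  have hV: "v has_fps_expansion V" unfolding V_def by (rule holo_fps[OF holv])
  have eW: "W = fps_X * \<Phi>" unfolding W_def
  proof (rule fps_eq_from_fun)
    show "w has_fps_expansion fps_expansion w 0" by (rule holo_fps[OF holw])
    show "(\<lambda>z. z * \<phi> z) has_fps_expansion fps_X * \<Phi>"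
      by (intro has_fps_expansion_mult has_fps_expansion_fps_X hPhi)
  qed (simp add: wphi)
  have rel: "v z * (1 - cnj a * \<phi> z) = \<phi> z - a" if z: "z \<in> ball 0 1" for z
  proof -
    have "norm (cnj a * \<phi> z) < 1"
      using na phib[OF z] by (simp add: norm_mult) (metis mult_strict_mono' norm_ge_zero mult_1 not_less)
    hence "1 - cnj a * \<phi> z \<noteq> 0" by auto
    thus ?thesis by (simp add: v_def Moebius_function_simple)
  qed
  have eV: "V * (1 - fps_const (cnj a) * \<Phi>) = \<Phi> - fps_const a"
  proof (rule fps_eq_from_fun)
    show "(\<lambda>z. v z * (1 - cnj a * \<phi> z)) has_fps_expansion V * (1 - fps_const (cnj a) * \<Phi>)"
      by (intro has_fps_expansion_mult hV has_fps_expansion_diff has_fps_expansion_1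
                has_fps_expansion_cmult_left hPhi)
    show "(\<lambda>z. \<phi> z - a) has_fps_expansion \<Phi> - fps_const a"
      by (intro has_fps_expansion_diff hPhi has_fps_expansion_const)
  qed (simp add: rel)
  have Phi0: "\<Phi>$0 = a" by (simp add: \<Phi>_def fps_expansion_nth0 phi0)
  have V0: "V$0 = 0" by (simp add: V_def fps_expansion_nth0 v0)
  have W2: "W$2 = \<Phi>$1" and W3: "W$3 = \<Phi>$2" by (simp_all add: eW mult_coeffs)
  have e: "(V * (1 - fps_const (cnj a) * \<Phi>)) $ n = (\<Phi> - fps_const a) $ n" for n using eV by simp
  have c1: "V$1 * (1 - cnj a * a) = \<Phi>$1" using e[of 1] by (simp add: mult_coeffs V0 Phi0)
  have c2: "V$1 * (- (cnj a * \<Phi>$1)) + V$2 * (1 - cnj a * a) = \<Phi>$2"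
    using e[of 2] by (simp add: mult_coeffs V0 Phi0)
  show ?thesis
  proof (rule that[OF sv])
    show "fps_expansion w 0 $ 2 = (1 - cnj a * a) * fps_expansion v 0 $ 1"
      using W2 c1 by (simp add: W_def V_def mult.commute)
    show "fps_expansion w 0 $ 3 = (1 - cnj a * a) * (fps_expansion v 0 $ 2 - cnj a * (fps_expansion v 0 $ 1)^2)"
    proof -
      have "V$1 * (- (cnj a * (V$1 * (1 - cnj a * a)))) + V$2 * (1 - cnj a * a) = \<Phi>$2"
        using c2 unfolding c1[symmetric] .
      hence "\<Phi>$2 = (1 - cnj a * a) * (V$2 - cnj a * (V$1)^2)"
        by (simp add: algebra_simps power2_eq_square)
      thus ?thesis using W3 by (simp add: W_def V_def)
    qed
  qed
qed

lemma norm_s: "norm (1 - cnj a * a) = 1 - norm a ^ 2" if "norm a \<le> 1" for a :: complex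
proof -
  have "cnj a * a = of_real (norm a ^ 2)"
    using complex_norm_square[of a] by (simp add: mult.commute)
  hence "1 - cnj a * a = of_real (1 - norm a ^2)" by simp
  moreover have "0 \<le> 1 - norm a ^ 2" using that by (simp add: power_le_one)
  ultimately show ?thesis by (simp only: norm_of_real)
qed

lemma schw_c2:
  assumes "schw w" shows "norm (fps_expansion w 0 $ 2) \<le> 1 - norm (fps_expansion w 0 $ 1)^2"
proof -
  have n1: "norm (fps_expansion w 0 $ 1) \<le> 1" by (rule schw_c1[OF assms])
  show ?thesis
  proof (cases "norm (fps_expansion w 0 $ 1) = 1")
    case True thus ?thesis using schw_eq1[OF assms True] by simp
  next
    case False
    hence lt: "norm (fps_expansion w 0 $ 1) < 1" using n1 by simp
    obtain v where v: "schw v"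
      "fps_expansion w 0 $ 2 = (1 - cnj (fps_expansion w 0 $ 1) * fps_expansion w 0 $ 1) * fps_expansion v 0 $ 1"
      by (rule schur[OF assms lt])
    have "norm (fps_expansion w 0 $ 2) = (1 - norm (fps_expansion w 0 $ 1)^2) * norm (fps_expansion v 0 $ 1)"
      using v(2) norm_s[OF n1] by (simp add: norm_mult)
    also have "\<dots> \<le> (1 - norm (fps_expansion w 0 $ 1)^2) * 1"
      using schw_c1[OF v(1)] n1 by (intro mult_left_mono) (auto simp: power_le_one)
    finally show ?thesis by simp
  qed
qed

lemma schw_c3:
  assumes "schw w"
  shows "norm (fps_expansion w 0 $ 3 - 10/3 * fps_expansion w 0 $ 1 * fps_expansion w 0 $ 2
           + 31/12 * (fps_expansion w 0 $ 1)^3) \<le> 31/12"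
proof -
  define a where "a = fps_expansion w 0 $ 1"
  have n1: "norm a \<le> 1" unfolding a_def by (rule schw_c1[OF assms])
  show ?thesis
  proof (cases "norm a = 1")
    case True thus ?thesis using schw_eq1[OF assms] by (simp add: a_def norm_mult norm_power)
  next
    case False
    hence lt: "norm a < 1" using n1 by simp
    obtain v where v: "schw v"
      "fps_expansion w 0 $ 2 = (1 - cnj a * a) * fps_expansion v 0 $ 1"
      "fps_expansion w 0 $ 3 = (1 - cnj a * a) * (fps_expansion v 0 $ 2 - cnj a * (fps_expansion v 0 $ 1)^2)"
      by (rule schur[OF assms lt[unfolded a_def]]) (simp_all add: a_def)
    have d1: "norm (fps_expansion v 0 $ 1) \<le> 1" by (rule schw_c1[OF v(1)])
    have d2: "norm (fps_expansion v 0 $ 2) \<le> 1 - norm (fps_expansion v 0 $ 1)^2" by (rule schw_c2[OF v(1)])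
    show ?thesis using key_ineq[OF lt d1 d2] by (simp add: v(2,3) a_def[symmetric])
  qed
qed

lemma upper_bounds:
  assumes "f \<in> class_SG"
  shows "norm (inv_coeff f 2) \<le> 1/2 \<and> norm (inv_coeff f 3) \<le> 5/12 \<and> norm (inv_coeff f 4) \<le> 31/72"
proof -
  from assms have fS: "f \<in> class_S" and sub: "subordinate (starlike_quot f) Psi"
    by (auto simp: class_SG_def)
  from sub obtain w where holw: "w holomorphic_on ball 0 1" and w0: "w 0 = 0"
    and wz: "\<And>z. z \<in> ball 0 1 \<Longrightarrow> norm (w z) < 1 \<and> starlike_quot f z = Psi (w z)"
    by (auto simp: subordinate_def)
  have sw: "schw w" using holw w0 wz by (simp add: schw_def)
  have mc2: "inv_coeff f 2 = - fps_expansion w 0 $ 1/2"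
    and mc3: "inv_coeff f 3 = 5/12*(fps_expansion w 0 $ 1)^2 - fps_expansion w 0 $ 2/4"
    and mc4: "inv_coeff f 4 = -(1/6)*(fps_expansion w 0 $ 3 - 10/3*fps_expansion w 0 $ 1*fps_expansion w 0 $ 2
        + 31/12*(fps_expansion w 0 $ 1)^3)"
    using main_coeffs[OF fS holw w0] wz by auto
  define c1 where "c1 = fps_expansion w 0 $ 1"
  define c2 where "c2 = fps_expansion w 0 $ 2"
  have n1: "norm c1 \<le> 1" unfolding c1_def by (rule schw_c1[OF sw])
  have n2: "norm c2 \<le> 1 - norm c1 ^2" unfolding c1_def c2_def by (rule schw_c2[OF sw])
  have A2: "norm (inv_coeff f 2) \<le> 1/2" using n1 by (simp add: mc2 c1_def[symmetric] norm_divide)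
  have "norm (inv_coeff f 3) \<le> 5/12 * norm c1 ^2 + norm c2 / 4"
    unfolding mc3 c1_def[symmetric] c2_def[symmetric]
    using norm_triangle_ineq4[of "5/12*c1^2" "c2/4"] by (simp add: norm_mult norm_power norm_divide)
  also have "\<dots> \<le> 5/12 * norm c1 ^2 + (1 - norm c1 ^2) / 4" using n2 by simp
  also have "\<dots> \<le> 5/12"
  proof -
    have "norm c1 ^2 \<le> 1" using n1 by (simp add: power_le_one)
    thus ?thesis by (simp add: field_simps)
  qed
  finally have A3: "norm (inv_coeff f 3) \<le> 5/12" .
  have A4: "norm (inv_coeff f 4) \<le> 31/72"
    using schw_c3[OF sw] by (simp add: mc4 norm_mult)
  show ?thesis using A2 A3 A4 by simp
qed




lemma theta_sin: "\<bar>\<theta>\<bar> < pi \<Longrightarrow> \<theta> * sin \<theta> \<ge> (sin \<theta>)^2"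
proof -
  assume th: "\<bar>\<theta>\<bar> < pi"
  have nn: "0 \<le> \<theta> * sin \<theta>"
  proof (cases "0 \<le> \<theta>")
    case True thus ?thesis using th sin_ge_zero[of \<theta>] by simp
  next
    case False
    hence "0 \<le> sin (-\<theta>)" using th sin_ge_zero[of "-\<theta>"] by simp
    thus ?thesis using False by (simp add: mult_nonpos_nonpos)
  qed
  have "(sin \<theta>)^2 = \<bar>sin \<theta>\<bar> * \<bar>sin \<theta>\<bar>" by (simp add: power2_eq_square)
  also have "\<dots> \<le> \<bar>\<theta>\<bar> * \<bar>sin \<theta>\<bar>" by (intro mult_right_mono abs_sin_x_le_abs_x) auto
  also have "\<dots> = \<theta> * sin \<theta>" using nn by (simp add: abs_mult[symmetric])
  finally show ?thesis .
qed

lemma Psi_Re_pos: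
  assumes u: "norm u < 1" shows "Re (Psi u) > 0"
proof (cases "u = 0")
  case True thus ?thesis by (simp add: Psi_def)
next
  case False
  define v where "v = 1 + u"
  define L where "L = Ln v"
  define X where "X = Re v"
  define Yv where "Yv = Im v"
  define r where "r = norm v"
  define \<theta> where "\<theta> = Im L"
  have ReuX: "Re u = X - 1" and ImuY: "Im u = Yv" by (simp_all add: X_def Yv_def v_def)
  have "\<bar>Re u\<bar> < 1" using abs_Re_le_cmod[of u] u by linarith
  hence X0: "X > 0" by (simp add: X_def v_def)
  hence v0: "v \<noteq> 0" by (auto simp: X_def)
  have r0: "r > 0" using v0 by (simp add: r_def)
  have ReL: "Re L = ln r" using v0 by (simp add: L_def r_def)
  have L0: "L \<noteq> 0" using Lg_ne0[OF u False] by (simp add: L_def v_def Lg_def)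
  have eL: "exp L = v" using v0 by (simp add: L_def)
  have Ysin: "Yv = r * sin \<theta>"
    using arg_cong[OF eL, of Im] r0 by (simp add: Im_exp ReL Yv_def \<theta>_def)
  have th: "\<bar>\<theta>\<bar> < pi/2" using Re_Ln_pos_lt_imp[of v] X0 by (simp add: \<theta>_def L_def X_def)
  have ts: "\<theta> * sin \<theta> \<ge> (sin \<theta>)^2" by (rule theta_sin) (use th in linarith)
  have Yth: "Yv * \<theta> \<ge> Yv^2 / r"
  proof -
    have "Yv^2 / r = r * (sin \<theta>)^2" using r0 by (simp add: Ysin power2_eq_square)
    also have "\<dots> \<le> r * (\<theta> * sin \<theta>)" using ts r0 by (intro mult_left_mono) auto
    also have "\<dots> = Yv * \<theta>" by (simp add: Ysin)
    finally show ?thesis .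
  qed
  have Yth0: "Yv * \<theta> \<ge> 0" using Yth r0 by (meson divide_nonneg_pos order_trans zero_le_power2)
  have Ythpos: "Yv * \<theta> > 0" if "Yv \<noteq> 0"
  proof -
    have "Yv^2 / r > 0" using that r0 by simp
    thus ?thesis using Yth by linarith
  qed
  have rr: "r^2 = X^2 + Yv^2" by (simp add: r_def X_def Yv_def cmod_power2)
  have rX: "\<bar>X\<bar> \<le> r" using abs_Re_le_cmod[of v] by (simp add: X_def r_def)
  have uv: "(X - 1)^2 + Yv^2 > 0"
  proof -
    have "Re u \<noteq> 0 \<or> Im u \<noteq> 0" using False by (auto simp: complex_eq_iff)
    thus ?thesis using ReuX ImuY by (auto simp: sum_power2_gt_zero_iff)
  qed
  have key: "(X - 1) * ln r + Yv * \<theta> > 0"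
  proof -
    consider "1 \<le> r" "1 \<le> X" | "r \<le> 1" "X \<le> 1" | "1 < r" "X < 1" | "r < 1" "1 < X" by linarith
    thus ?thesis
    proof cases
      case 1
      have a: "(X - 1) * ln r \<ge> 0" using 1 by simp
      show ?thesis
      proof (cases "Yv = 0")
        case True
        hence "X \<noteq> 1" using uv by auto
        hence "X > 1" using 1 by simp
        moreover have "r = X" using True rr X0 r0 by (simp add: power2_eq_iff_nonneg)
        ultimately show ?thesis using True by simp
      qed (use a Ythpos in auto)
    next
      case 2
      have a: "(X - 1) * ln r \<ge> 0" using 2 r0 by (intro mult_nonpos_nonpos) auto
      show ?thesis
      proof (cases "Yv = 0")
        case True
        hence "X \<noteq> 1" using uv by auto
        hence "X < 1" using 2 by simp
        moreover have "r = X" using True rr X0 r0 by (simp add: power2_eq_iff_nonneg)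
        ultimately have "(X - 1) * ln r > 0" using X0 by (intro mult_neg_neg) auto
        thus ?thesis using True by simp
      qed (use a Ythpos in auto)
    next
      case 3
      have "ln r \<le> r - 1" using r0 by (rule ln_le_minus_one)
      hence a: "(X - 1) * ln r \<ge> (X - 1) * (r - 1)" using 3 by (intro mult_left_mono_neg) auto
      have "r * ((X - 1) * (r - 1)) + (r^2 - X^2) = X * r * (r - 1) + (r - X^2)"
        by (simp add: algebra_simps power2_eq_square)
      moreover have "X * r * (r - 1) > 0" using X0 3 by simp
      moreover have "X^2 < 1" using X0 3 by (simp add: power_less_one_iff)
      ultimately have "r * ((X - 1) * (r - 1)) + (r^2 - X^2) > 0" using 3 by simp
      hence "(X - 1) * (r - 1) + (r^2 - X^2) / r > 0" using r0
        by (simp add: field_simps)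
      moreover have "(r^2 - X^2)/r = Yv^2 / r" using rr by simp
      ultimately show ?thesis using a Yth by linarith
    next
      case 4 thus ?thesis using rX by simp
    qed
  qed
  have "Re (Psi u) = Re (u / L)" by (simp add: Psi_def False L_def v_def)
  also have "\<dots> = (Re u * Re L + Im u * Im L) / (norm L)^2" by (rule Re_divide')
  also have "\<dots> = ((X - 1) * ln r + Yv * \<theta>) / (norm L)^2" by (simp add: ReuX ImuY ReL \<theta>_def)
  finally show ?thesis using key L0 by simp
qed




lemma noshiro:
  assumes S: "convex S" and dF: "\<And>z. z \<in> S \<Longrightarrow> (F has_field_derivative F' z) (at z)"
    and pos: "\<And>z. z \<in> S \<Longrightarrow> Re (F' z) > 0"
  shows "inj_on F S"
proof (rule inj_onI, rule ccontr)
  fix a b assume ab: "a \<in> S" "b \<in> S" "F a = F b" "a \<noteq> b"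
  define G where "G = (\<lambda>z. F z / (b - a))"
  have seg: "closed_segment a b \<subseteq> S" by (rule closed_segment_subset[OF ab(1,2) S])
  have dG: "(G has_field_derivative F' u / (b - a)) (at u)" if "u \<in> closed_segment a b" for u
    unfolding G_def using dF[of u] seg that ab(4) by (auto intro!: derivative_eq_intros)
  obtain u where u: "u \<in> closed_segment a b" "Re (G b) - Re (G a) = Re (F' u / (b - a) * (b - a))"
    using complex_mvt_line[of a b G "\<lambda>u. F' u / (b - a)", OF dG] by blast
  have "Re (F' u / (b - a) * (b - a)) = Re (F' u)" using ab(4) by simp
  moreover have "Re (G b) - Re (G a) = 0" using ab(3) by (simp add: G_def)
  ultimately show False using pos[of u] u seg by auto
qed

definition qf :: "complex \<Rightarrow> complex" where
  "qf z = (if z = 0 then deriv Psi 0 else (Psi z - Psi 0) / (z - 0))"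

lemma qf_holo: "qf holomorphic_on ball 0 1"
  unfolding qf_def by (rule pole_lemma[OF Psi_holo]) auto

lemma qf_Psi: "1 + z * qf z = Psi z"
  by (cases "z = 0") (auto simp: qf_def Psi_def[of 0])

lemma extremal_exists:
  "\<exists>f\<in>class_SG. inv_coeff f 2 = -1/2 \<and> inv_coeff f 3 = 5/12"
proof -
  obtain I0 where I0: "\<And>x. x \<in> ball 0 1 \<Longrightarrow> (I0 has_field_derivative qf x) (at x within ball 0 1)"
    using holomorphic_convex_primitive'[OF convex_ball open_ball qf_holo] by blast
  define I where "I = (\<lambda>z. I0 z - I0 0)"
  have dI: "(I has_field_derivative qf x) (at x)" if "x \<in> ball 0 1" for x
  proof -
    have "(I0 has_field_derivative qf x) (at x)" using I0[OF that] that
      by (simp add: at_within_open[OF _ open_ball])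
    thus ?thesis unfolding I_def by (auto intro!: derivative_eq_intros)
  qed
  have I00: "I 0 = 0" by (simp add: I_def)
  define f where "f = (\<lambda>z. z * exp (I z))"
  have df: "(f has_field_derivative exp (I x) * Psi x) (at x)" if "x \<in> ball 0 1" for x
  proof -
    have de: "((\<lambda>z. exp (I z)) has_field_derivative exp (I x) * qf x) (at x)"
      by (rule DERIV_fun_exp[OF dI[OF that]])
    have "(f has_field_derivative (1 * exp (I x) + (exp (I x) * qf x) * x)) (at x)"
      unfolding f_def by (rule DERIV_mult[OF DERIV_ident de])
    also have "1 * exp (I x) + (exp (I x) * qf x) * x = exp (I x) * Psi x"
      by (simp add: qf_Psi[symmetric] algebra_simps)
    finally show ?thesis .
  qed
  have holf: "f holomorphic_on ball 0 1"
    using df by (auto simp: holomorphic_on_open intro!: exI)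
  have f0: "f 0 = 0" by (simp add: f_def)
  have derf: "deriv f x = exp (I x) * Psi x" if "x \<in> ball 0 1" for x
    using df[OF that] by (rule DERIV_imp_deriv)
  have df0: "deriv f 0 = 1" using derf[of 0] by (simp add: I00 Psi_def)
  have sq: "starlike_quot f z = Psi z" if "z \<in> ball 0 1" for z
    using derf[OF that] by (cases "z = 0") (auto simp: starlike_quot_def Psi_def f_def)
  define H where "H = {\<zeta>::complex. Re \<zeta> < 0}"
  have convH: "convex H" unfolding H_def by (rule convex_halfspace_Re_lt)
  have expH: "exp \<zeta> \<in> ball 0 1" if "\<zeta> \<in> H" for \<zeta> using that by (simp add: H_def)
  define F where "F = (\<lambda>\<zeta>. \<zeta> + I (exp \<zeta>))"
  have dF: "(F has_field_derivative Psi (exp \<zeta>)) (at \<zeta>)" if "\<zeta> \<in> H" for \<zeta>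
  proof -
    have d1: "((\<lambda>\<zeta>. I (exp \<zeta>)) has_field_derivative qf (exp \<zeta>) * exp \<zeta>) (at \<zeta>)"
      by (rule DERIV_chain2[OF dI[OF expH[OF that]] DERIV_exp])
    have "(F has_field_derivative 1 + qf (exp \<zeta>) * exp \<zeta>) (at \<zeta>)"
      unfolding F_def by (rule DERIV_add[OF DERIV_ident d1])
    thus ?thesis by (simp add: qf_Psi[symmetric] mult.commute)
  qed
  have injF: "inj_on F H"
    by (rule noshiro[OF convH dF]) (use Psi_Re_pos expH in auto)
  have expF: "exp (F \<zeta>) = f (exp \<zeta>)" for \<zeta> by (simp add: F_def f_def exp_add)
  have injf: "inj_on f (ball 0 1)"
  proof (rule inj_onI)
    fix z1 z2 assume z: "z1 \<in> ball 0 1" "z2 \<in> ball 0 1" "f z1 = f z2"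
    show "z1 = z2"
    proof (cases "z1 = 0 \<or> z2 = 0")
      case True thus ?thesis using z(3) by (auto simp: f_def)
    next
      case False
      define \<zeta>1 where "\<zeta>1 = Ln z1"
      define \<zeta>2 where "\<zeta>2 = Ln z2"
      have e1: "exp \<zeta>1 = z1" and e2: "exp \<zeta>2 = z2" using False by (simp_all add: \<zeta>1_def \<zeta>2_def)
      have h1: "\<zeta>1 \<in> H" and h2: "\<zeta>2 \<in> H" using False z by (simp_all add: H_def \<zeta>1_def \<zeta>2_def ln_less_zero_iff)
      have "exp (F \<zeta>1) = exp (F \<zeta>2)" using z(3) by (simp add: expF e1 e2)
      then obtain n :: int where n: "F \<zeta>1 = F \<zeta>2 + of_int (2 * n) * pi * \<i>"
        by (auto simp: exp_eq)
      define \<zeta>3 where "\<zeta>3 = \<zeta>2 + \<i> * (of_int n * (of_real pi * 2))"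
      have e3: "exp \<zeta>3 = exp \<zeta>2" by (simp add: \<zeta>3_def)
      have h3: "\<zeta>3 \<in> H" using h2 by (simp add: H_def \<zeta>3_def)
      have "F \<zeta>3 = F \<zeta>2 + \<i> * (of_int n * (of_real pi * 2))" by (simp add: F_def e3 \<zeta>3_def)
      hence "F \<zeta>1 = F \<zeta>3" using n by (simp add: algebra_simps)
      hence "\<zeta>1 = \<zeta>3" using injF h1 h3 by (meson inj_onD)
      thus ?thesis using e1 e2 e3 by simp
    qed
  qed
  have fS: "f \<in> class_S" using holf injf f0 df0 by (simp add: class_S_def)
  have fSG: "f \<in> class_SG"
    unfolding class_SG_def subordinate_def
    using fS sq by (auto intro!: exI[of _ "\<lambda>z. z"] holomorphic_intros)
  have idfps: "fps_expansion (\<lambda>z. z) 0 = fps_X"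
    by (rule fps_unique[OF holo_fps has_fps_expansion_fps_X]) (intro holomorphic_intros)
  have mc: "inv_coeff f 2 = - fps_expansion (\<lambda>z. z) 0 $ 1/2"
    "inv_coeff f 3 = 5/12*(fps_expansion (\<lambda>z. z) 0 $ 1)^2 - fps_expansion (\<lambda>z. z) 0 $ 2/4"
    using main_coeffs[OF fS, of "\<lambda>z. z"] sq by (auto intro: holomorphic_intros)
  show ?thesis using fSG mc by (auto simp: idfps)
qed



theorem theorem4:
  shows "(\<forall>f\<in>class_SG.
           norm (inv_coeff f 2) \<le> 1/2 \<and>
           norm (inv_coeff f 3) \<le> 5/12 \<and>
           norm (inv_coeff f 4) \<le> 31/72) \<and>
         (\<exists>f\<in>class_SG. norm (inv_coeff f 2) = 1/2) \<and>
         (\<exists>f\<in>class_SG. norm (inv_coeff f 3) = 5/12)"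
proof -
  have A: "\<forall>f\<in>class_SG. norm (inv_coeff f 2) \<le> 1/2 \<and> norm (inv_coeff f 3) \<le> 5/12 \<and>
           norm (inv_coeff f 4) \<le> 31/72" using upper_bounds by blast
  obtain f where f: "f \<in> class_SG" "inv_coeff f 2 = -1/2" "inv_coeff f 3 = 5/12"
    using extremal_exists by blast
  have "norm (inv_coeff f 2) = 1/2" unfolding f(2) by simp
  moreover have "norm (inv_coeff f 3) = 5/12" unfolding f(3) by simp
  ultimately
  show ?thesis using A f(1) by blast
qed

end
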